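(* Let $X$ be a two-sided quaternionic Banach space and let $T\in\mathcal{B}(X)$ be invertible in $\mathcal{B}(X)$ and doubly power-bounded, i.e. $\sup_{n\in\mathbb{Z}}\|T^n\|<\infty$. If $\sigma_S(T)=\{1\}$, then $T=\mathcal{I}$.
   Context: $\mathbb{H}$ denotes the real algebra of quaternions; for $s\in\mathbb{H}$, $\mathrm{Re}(s)$ is its real part and $|s|$ its modulus. $X$ is a two-sided vector space over $\mathbb{H}$ which is a Banach space; $\mathcal{B}(X)$ is the algebra of bounded right $\mathbb{H}$-linear operators on $X$ with identity $\mathcal{I}$ and operator norm; negative powers $T^{-n}$ denote powers of the inverse. For $s\in\mathbb{H}$ put $Q_s(T)=T^2-2\mathrm{Re}(s)T+|s|^2\mathcal{I}$; the $S$-spectrum is $\sigma_S(T)=\{s\in\mathbb{H}: Q_s(T)\text{ is not invertible in }\mathcal{B}(X)\}$. *)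

theory Defs
  imports "HOL-Analysis.Analysis"
begin

datatype quat = Quat (qRe: real) (qI: real) (qJ: real) (qK: real)

definition qadd :: "quat \<Rightarrow> quat \<Rightarrow> quat" where
  "qadd p q = Quat (qRe p + qRe q) (qI p + qI q) (qJ p + qJ q) (qK p + qK q)"

definition qmult :: "quat \<Rightarrow> quat \<Rightarrow> quat" where
  "qmult p q = Quat
     (qRe p * qRe q - qI p * qI q - qJ p * qJ q - qK p * qK q)
     (qRe p * qI q + qI p * qRe q + qJ p * qK q - qK p * qJ q)
     (qRe p * qJ q - qI p * qK q + qJ p * qRe q + qK p * qI q)
     (qRe p * qK q + qI p * qJ q - qJ p * qI q + qK p * qRe q)"

definition qabs :: "quat \<Rightarrow> real" where
  "qabs q = sqrt ((qRe q)\<^sup>2 + (qI q)\<^sup>2 + (qJ q)\<^sup>2 + (qK q)\<^sup>2)"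

definition qreal :: "real \<Rightarrow> quat" where
  "qreal r = Quat r 0 0 0"

text \<open>The carrier is a real Banach space \<open>'a::banach\<close> together with a left scalar
  multiplication \<open>lmul\<close> and a right scalar multiplication \<open>rmul\<close> by quaternions,
  making it a two-sided \<open>\<bbbH>\<close>-vector space whose norm is quaternionic
  (\<open>\<parallel>s x\<parallel> = \<parallel>x s\<parallel> = |s| \<parallel>x\<parallel>\<close>), and whose real structure is the given one.\<close>
definition two_sided_qbanach :: "(quat \<Rightarrow> 'a::banach \<Rightarrow> 'a) \<Rightarrow> ('a \<Rightarrow> quat \<Rightarrow> 'a) \<Rightarrow> bool" where
  "two_sided_qbanach lmul rmul \<longleftrightarrow>
     (\<forall>s x y. lmul s (x + y) = lmul s x + lmul s y) \<and>
     (\<forall>s t x. lmul (qadd s t) x = lmul s x + lmul t x) \<and>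
     (\<forall>s t x. lmul (qmult s t) x = lmul s (lmul t x)) \<and>
     (\<forall>s x y. rmul (x + y) s = rmul x s + rmul y s) \<and>
     (\<forall>s t x. rmul x (qadd s t) = rmul x s + rmul x t) \<and>
     (\<forall>s t x. rmul x (qmult s t) = rmul (rmul x s) t) \<and>
     (\<forall>s t x. rmul (lmul s x) t = lmul s (rmul x t)) \<and>
     (\<forall>r x. lmul (qreal r) x = r *\<^sub>R x) \<and>
     (\<forall>r x. rmul x (qreal r) = r *\<^sub>R x) \<and>
     (\<forall>s x. norm (lmul s x) = qabs s * norm x) \<and>
     (\<forall>s x. norm (rmul x s) = qabs s * norm x)"

definition bounded_right_linear :: "('a::banach \<Rightarrow> quat \<Rightarrow> 'a) \<Rightarrow> ('a \<Rightarrow> 'a) \<Rightarrow> bool" where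
  "bounded_right_linear rmul T \<longleftrightarrow>
     bounded_linear T \<and> (\<forall>x s. T (rmul x s) = rmul (T x) s)"

definition invertible_op :: "('a::banach \<Rightarrow> quat \<Rightarrow> 'a) \<Rightarrow> ('a \<Rightarrow> 'a) \<Rightarrow> bool" where
  "invertible_op rmul T \<longleftrightarrow> bounded_right_linear rmul T \<and>
     (\<exists>S. bounded_right_linear rmul S \<and> T \<circ> S = id \<and> S \<circ> T = id)"

definition op_int_power :: "('a \<Rightarrow> 'a) \<Rightarrow> int \<Rightarrow> ('a \<Rightarrow> 'a)" where
  "op_int_power T n = (if 0 \<le> n then T ^^ nat n else (inv T) ^^ nat (- n))"

definition Qop :: "quat \<Rightarrow> ('a::real_vector \<Rightarrow> 'a) \<Rightarrow> ('a \<Rightarrow> 'a)" where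
  "Qop s T = (\<lambda>x. T (T x) - (2 * qRe s) *\<^sub>R T x + (qabs s)\<^sup>2 *\<^sub>R x)"

definition S_spectrum :: "('a::banach \<Rightarrow> quat \<Rightarrow> 'a) \<Rightarrow> ('a \<Rightarrow> 'a) \<Rightarrow> quat set" where
  "S_spectrum rmul T = {s. \<not> invertible_op rmul (Qop s T)}"

end

theory Submission
  imports Defs "HOL-Complex_Analysis.Complex_Analysis"
begin


definition hb_ok :: "'a::real_normed_vector \<Rightarrow> ('a \<times> real) set \<Rightarrow> bool" where
  "hb_ok y G \<longleftrightarrow> (\<forall>x a b. (x,a)\<in>G \<longrightarrow> (x,b)\<in>G \<longrightarrow> a = b) \<and> (y, norm y) \<in> G \<and>
     (\<forall>x a. (x,a) \<in> G \<longrightarrow> a \<le> norm x) \<and>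
     (\<forall>x a z b r s. (x,a)\<in>G \<longrightarrow> (z,b)\<in>G \<longrightarrow> (r *\<^sub>R x + s *\<^sub>R z, r*a + s*b) \<in> G)"

lemma hb_extend:
  fixes G :: "('a::real_normed_vector \<times> real) set"
  assumes ok: "hb_ok y G" and x0: "\<forall>a. (x0,a) \<notin> G"
  shows "\<exists>G'. hb_ok y G' \<and> G \<subseteq> G' \<and> G' \<noteq> G"
proof -
  have fnc: "\<And>x a b. (x,a)\<in>G \<Longrightarrow> (x,b)\<in>G \<Longrightarrow> a = b" and yG: "(y, norm y) \<in> G"
    and dom: "\<And>x a. (x,a) \<in> G \<Longrightarrow> a \<le> norm x"
    and lin: "\<And>x a z b r s. (x,a)\<in>G \<Longrightarrow> (z,b)\<in>G \<Longrightarrow> (r *\<^sub>R x + s *\<^sub>R z, r*a + s*b) \<in> G"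
    using ok unfolding hb_ok_def by blast+
  have z0: "(0,0) \<in> G" using lin[OF yG yG, of 0 0] by simp
  define L where "L = {a - norm (d - x0) | d a. (d,a) \<in> G}"
  have key: "a1 - norm (d1 - x0) \<le> norm (d2 + x0) - a2" if "(d1,a1)\<in>G" "(d2,a2)\<in>G" for d1 a1 d2 a2
  proof -
    have "(d1 + d2, a1 + a2) \<in> G" using lin[OF that, of 1 1] by simp
    then have "a1 + a2 \<le> norm (d1 + d2)" by (rule dom)
    also have "\<dots> \<le> norm (d1 - x0) + norm (d2 + x0)"
      using norm_triangle_ineq[of "d1 - x0" "d2 + x0"] by simp
    finally show ?thesis by simp
  qed
  have Lne: "L \<noteq> {}" using z0 unfolding L_def by blast
  have Lbdd: "bdd_above L" unfolding L_def bdd_above_def using key[OF _ z0] by fastforce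
  define c where "c = Sup L"
  have c1: "a - norm (d - x0) \<le> c" if "(d,a)\<in>G" for d a
    unfolding c_def by (rule cSup_upper[OF _ Lbdd]) (use that L_def in blast)
  have c2: "c \<le> norm (d + x0) - a" if "(d,a)\<in>G" for d a
    unfolding c_def by (rule cSup_least[OF Lne]) (use key[OF _ that] L_def in blast)
  define G' where "G' = {(d + t *\<^sub>R x0, a + t * c) | d a t. (d,a) \<in> G}"
  have "hb_ok y G'"
    unfolding hb_ok_def
  proof (intro conjI allI impI)
    fix x a b assume "(x,a) \<in> G'" "(x,b) \<in> G'"
    then obtain d1 a1 t1 d2 a2 t2 where h: "x = d1 + t1 *\<^sub>R x0" "a = a1 + t1 * c" "(d1,a1)\<in>G"
      "x = d2 + t2 *\<^sub>R x0" "b = a2 + t2 * c" "(d2,a2)\<in>G" unfolding G'_def by blast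
    have "(d2 - d1, a2 - a1) \<in> G" using lin[OF h(6) h(3), of 1 "-1"] by simp
    then have G1: "((1/(t1 - t2)) *\<^sub>R (d2 - d1), (1/(t1-t2)) * (a2 - a1)) \<in> G"
      using lin[of "d2 - d1" "a2 - a1" "d2 - d1" "a2 - a1" "1/(t1-t2)" 0] by simp
    have "t1 = t2"
    proof (rule ccontr)
      assume ne: "t1 \<noteq> t2"
      have "d2 - d1 = (t1 - t2) *\<^sub>R x0" using h(1,4) by (simp add: algebra_simps)
      then have "(1/(t1 - t2)) *\<^sub>R (d2 - d1) = x0" using ne by simp
      then show False using G1 x0 by metis
    qed
    then have "d1 = d2" using h by simp
    then have "a1 = a2" using fnc h by blast
    then show "a = b" using h \<open>t1 = t2\<close> by simp
  next
    show "(y, norm y) \<in> G'" unfolding G'_def using yG by force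
  next
    fix x a assume "(x,a) \<in> G'"
    then obtain d a1 t where h: "x = d + t *\<^sub>R x0" "a = a1 + t * c" "(d,a1)\<in>G"
      unfolding G'_def by blast
    consider "t = 0" | "t > 0" | "t < 0" by linarith
    then show "a \<le> norm x"
    proof cases
      case 1 then show ?thesis using h dom by simp
    next
      case 2
      have "((1/t) *\<^sub>R d, (1/t) * a1) \<in> G" using lin[OF h(3) h(3), of "1/t" 0] by simp
      from c2[OF this] have "c \<le> norm ((1/t) *\<^sub>R d + x0) - (1/t) * a1" .
      also have "(1/t) *\<^sub>R d + x0 = (1/t) *\<^sub>R x" using h 2 by (simp add: algebra_simps)
      finally have "t * c \<le> t * (norm ((1/t) *\<^sub>R x) - (1/t) * a1)" using 2 by simp
      also have "\<dots> = norm x - a1" using 2 by (simp add: algebra_simps)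
      finally show ?thesis using h by simp
    next
      case 3
      define s where "s = - t"
      have s: "s > 0" using 3 s_def by simp
      have "((1/s) *\<^sub>R d, (1/s) * a1) \<in> G" using lin[OF h(3) h(3), of "1/s" 0] by simp
      from c1[OF this] have "(1/s) * a1 - norm ((1/s) *\<^sub>R d - x0) \<le> c" .
      also have "(1/s) *\<^sub>R d - x0 = (1/s) *\<^sub>R x" using h s s_def by (simp add: algebra_simps)
      finally have "s * ((1/s) * a1 - norm ((1/s) *\<^sub>R x)) \<le> s * c" using s by simp
      then have "a1 - norm x \<le> s * c" using s by (simp add: algebra_simps)
      then show ?thesis using h s_def by simp
    qed
  next
    fix x a z b r s assume "(x,a) \<in> G'" "(z,b) \<in> G'"
    then obtain d1 a1 t1 d2 a2 t2 where h: "x = d1 + t1 *\<^sub>R x0" "a = a1 + t1 * c" "(d1,a1)\<in>G"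
      "z = d2 + t2 *\<^sub>R x0" "b = a2 + t2 * c" "(d2,a2)\<in>G" unfolding G'_def by blast
    have "(r *\<^sub>R d1 + s *\<^sub>R d2, r * a1 + s * a2) \<in> G" using lin h by blast
    moreover have "r *\<^sub>R x + s *\<^sub>R z = (r *\<^sub>R d1 + s *\<^sub>R d2) + (r*t1 + s*t2) *\<^sub>R x0"
      using h by (simp add: algebra_simps)
    moreover have "r*a + s*b = (r * a1 + s * a2) + (r*t1 + s*t2) * c"
      using h by (simp add: algebra_simps)
    ultimately show "(r *\<^sub>R x + s *\<^sub>R z, r*a + s*b) \<in> G'" unfolding G'_def by blast
  qed
  moreover have "G \<subseteq> G'" unfolding G'_def by force
  moreover have "(x0, c) \<in> G'" unfolding G'_def using z0 by force
  ultimately show ?thesis using x0 by blast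
qed

lemma hahn_banach_point:
  fixes y :: "'a::real_normed_vector"
  assumes "y \<noteq> 0"
  shows "\<exists>\<phi>::'a \<Rightarrow> real. bounded_linear \<phi> \<and> \<phi> y \<noteq> 0"
proof -
  define A where "A = {G. hb_ok y G}"
  define G0 where "G0 = {(t *\<^sub>R y, t * norm y) | t. True}"
  have G0: "hb_ok y G0"
    unfolding hb_ok_def G0_def
  proof (intro conjI allI impI)
    fix x a b assume "(x,a) \<in> {(t *\<^sub>R y, t * norm y) |t. True}" "(x,b) \<in> {(t *\<^sub>R y, t * norm y) |t. True}"
    then obtain t1 t2 where "x = t1 *\<^sub>R y" "a = t1 * norm y" "x = t2 *\<^sub>R y" "b = t2 * norm y" by blast
    then show "a = b" using assms by (metis scaleR_cancel_right)
  next
    show "(y, norm y) \<in> {(t *\<^sub>R y, t * norm y) |t. True}" by (rule CollectI, rule exI[of _ 1]) simp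
  next
    fix x a assume "(x,a) \<in> {(t *\<^sub>R y, t * norm y) |t. True}"
    then obtain t where "x = t *\<^sub>R y" "a = t * norm y" by blast
    then show "a \<le> norm x" by (simp add: mult_right_mono)
  next
    fix x a z b r s assume "(x,a) \<in> {(t *\<^sub>R y, t * norm y) |t. True}" "(z,b) \<in> {(t *\<^sub>R y, t * norm y) |t. True}"
    then obtain t1 t2 where "x = t1 *\<^sub>R y" "a = t1 * norm y" "z = t2 *\<^sub>R y" "b = t2 * norm y" by blast
    then show "(r *\<^sub>R x + s *\<^sub>R z, r * a + s * b) \<in> {(t *\<^sub>R y, t * norm y) |t. True}"
      by (intro CollectI exI[of _ "r*t1 + s*t2"]) (simp add: algebra_simps)
  qed
  have "\<forall>C\<in>chains A. \<exists>U\<in>A. \<forall>X\<in>C. X \<subseteq> U"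
  proof
    fix C assume C: "C \<in> chains A"
    show "\<exists>U\<in>A. \<forall>X\<in>C. X \<subseteq> U"
    proof (cases "C = {}")
      case True then show ?thesis using G0 A_def by blast
    next
      case False
      have CA: "\<And>X. X \<in> C \<Longrightarrow> hb_ok y X" using chainsD2[OF C] A_def by blast
      have ch: "\<And>X Y. X \<in> C \<Longrightarrow> Y \<in> C \<Longrightarrow> X \<subseteq> Y \<or> Y \<subseteq> X" using chainsD[OF C] by blast
      have "hb_ok y (\<Union>C)" unfolding hb_ok_def
      proof (intro conjI allI impI)
        fix x a b assume "(x,a) \<in> \<Union>C" "(x,b) \<in> \<Union>C"
        then obtain X Y where "X \<in> C" "Y \<in> C" "(x,a) \<in> X" "(x,b) \<in> Y" by blast
        then show "a = b" using ch CA unfolding hb_ok_def by (metis subsetD)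
      next
        show "(y, norm y) \<in> \<Union>C" using False CA unfolding hb_ok_def by blast
      next
        fix x a assume "(x,a) \<in> \<Union>C" then show "a \<le> norm x" using CA unfolding hb_ok_def by blast
      next
        fix x a z b r s assume "(x,a) \<in> \<Union>C" "(z,b) \<in> \<Union>C"
        then obtain X Y where XY: "X \<in> C" "Y \<in> C" "(x,a) \<in> X" "(z,b) \<in> Y" by blast
        show "(r *\<^sub>R x + s *\<^sub>R z, r * a + s * b) \<in> \<Union>C"
        proof (cases "X \<subseteq> Y")
          case True then show ?thesis using XY CA[of Y] unfolding hb_ok_def by blast
        next
          case False then have "Y \<subseteq> X" using ch XY by blast
          then show ?thesis using XY CA[of X] unfolding hb_ok_def by blast
        qed
      qed
      then show ?thesis using A_def by blast
    qed
  qed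
  from Zorn_Lemma2[OF this] obtain G where G: "hb_ok y G" and max: "\<And>X. hb_ok y X \<Longrightarrow> G \<subseteq> X \<Longrightarrow> X = G"
    unfolding A_def by blast
  have total: "\<exists>a. (x,a) \<in> G" for x
  proof (rule ccontr)
    assume "\<not> ?thesis"
    then obtain G' where "hb_ok y G'" "G \<subseteq> G'" "G' \<noteq> G" using hb_extend[OF G] by blast
    then show False using max by blast
  qed
  have fnc: "\<And>x a b. (x,a)\<in>G \<Longrightarrow> (x,b)\<in>G \<Longrightarrow> a = b" and yG: "(y, norm y) \<in> G"
    and dom: "\<And>x a. (x,a) \<in> G \<Longrightarrow> a \<le> norm x"
    and lin: "\<And>x a z b r s. (x,a)\<in>G \<Longrightarrow> (z,b)\<in>G \<Longrightarrow> (r *\<^sub>R x + s *\<^sub>R z, r*a + s*b) \<in> G"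
    using G unfolding hb_ok_def by blast+
  define \<phi> where "\<phi> x = (THE a. (x,a) \<in> G)" for x
  have phiG: "(x, \<phi> x) \<in> G" for x
    unfolding \<phi>_def using total[of x] fnc by (metis theI)
  have phieq: "(x,a) \<in> G \<Longrightarrow> \<phi> x = a" for x a using phiG fnc by blast
  have lin2: "\<phi> (r *\<^sub>R x + s *\<^sub>R z) = r * \<phi> x + s * \<phi> z" for r s x z
    by (rule phieq, rule lin[OF phiG phiG])
  have "linear \<phi>"
  proof (rule linearI)
    fix b1 b2 show "\<phi> (b1 + b2) = \<phi> b1 + \<phi> b2" using lin2[of 1 b1 1 b2] by simp
  next
    fix r b show "\<phi> (r *\<^sub>R b) = r *\<^sub>R \<phi> b" using lin2[of r b 0 b] by simp
  qed
  moreover have "norm (\<phi> x) \<le> norm x * 1" for x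
  proof -
    have "\<phi> x \<le> norm x" using dom[OF phiG] .
    moreover have "- \<phi> x \<le> norm x" using dom[OF phiG[of "-x"]] lin2[of "-1" x 0 x] by simp
    ultimately show ?thesis by simp
  qed
  ultimately have "bounded_linear \<phi>" by (metis bounded_linear_intro linear_add linear_scale)
  moreover have "\<phi> y \<noteq> 0" using phieq[OF yG] assms by simp
  ultimately show ?thesis by blast
qed




lemma scalar_key:
  fixes k :: "complex \<Rightarrow> complex"
  assumes hol: "k holomorphic_on UNIV"
    and bnd: "\<And>u. 2 * Re u + 1 \<noteq> 0 \<Longrightarrow> cmod (k u) \<le> C * (cmod u + cmod (u + 1)) / \<bar>2 * Re u + 1\<bar>"
  shows "k u = k 0"
proof -
  have C0: "C \<ge> 0"
  proof -
    have "cmod (k 1) \<le> C * (cmod 1 + cmod (1 + 1)) / \<bar>2 * Re 1 + 1\<bar>" using bnd[of 1] by simp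
    then have "0 \<le> C * 3 / 3" by (simp add: numeral_eq_Suc) (smt (verit) norm_ge_zero)
    then show ?thesis by simp
  qed
  have G1: "cmod (k u0) \<le> C * (2 * cmod u0 + 4)" for u0
  proof (cases "\<bar>2 * Re u0 + 1\<bar> \<ge> 1")
    case True
    then have "cmod (k u0) \<le> C * (cmod u0 + cmod (u0 + 1)) / \<bar>2 * Re u0 + 1\<bar>" using bnd by force
    also have "\<dots> \<le> C * (cmod u0 + cmod (u0 + 1))"
      using True C0 by (simp add: divide_le_eq mult_left_mono mult_le_cancel_left1)
        (smt (verit) mult_nonneg_nonneg norm_ge_zero mult_left_mono)
    also have "\<dots> \<le> C * (2 * cmod u0 + 4)"
      using C0 norm_triangle_ineq[of u0 1] by (intro mult_left_mono) auto
    finally show ?thesis .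
  next
    case False
    define c where "c = Complex (-1/2) (Im u0)"
    define q where "q u = (u - c)^2 + 1" for u
    define B where "B = C * (2 * cmod u0 + 4)"
    have u0c: "cmod (u0 - c) < 1/2" using False
      by (simp add: c_def cmod_def) (auto simp: abs_if split: if_splits)
    have "cmod (k u0 * q u0) \<le> B"
    proof (rule maximum_modulus_frontier[where S = "cball c 1" and f = "\<lambda>u. k u * q u" and \<xi> = u0])
      show "(\<lambda>u. k u * q u) holomorphic_on interior (cball c 1)"
        unfolding q_def by (intro holomorphic_intros holomorphic_on_subset[OF hol]) auto
      show "continuous_on (closure (cball c 1)) (\<lambda>u. k u * q u)"
        unfolding q_def using holomorphic_on_imp_continuous_on[OF hol]
        by (intro continuous_intros) (auto intro: continuous_on_subset)
      show "bounded (cball c 1)" by simp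
      show "u0 \<in> cball c 1" using u0c by (simp add: dist_norm norm_minus_commute)
      fix u assume "u \<in> frontier (cball c 1)"
      then have u1: "cmod (u - c) = 1" by (simp add: dist_norm norm_minus_commute)
      define z where "z = u - c"
      have zc: "z * cnj z = 1" using u1 z_def
        by (metis complex_norm_square mult.commute of_real_1 power_one)
      have "q u = z * (z + cnj z)" unfolding q_def z_def[symmetric]
        using zc by (simp add: algebra_simps power2_eq_square)
      also have "z + cnj z = of_real (2 * Re u + 1)" unfolding z_def c_def
        by (simp add: complex_eq_iff)
      finally have "q u = z * of_real (2 * Re u + 1)" .
      then have qu: "cmod (q u) = \<bar>2 * Re u + 1\<bar>" using u1 z_def by (simp only: norm_mult norm_of_real) simp
      have ub: "cmod u + cmod (u + 1) \<le> 2 * cmod u0 + 4"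
      proof -
        have "cmod c \<le> cmod u0 + 1/2" using u0c norm_triangle_ineq3[of c u0]
          by (smt (verit) norm_minus_commute norm_triangle_ineq2)
        moreover have "cmod u \<le> cmod c + 1" using u1 norm_triangle_ineq[of "u - c" c] by simp
        moreover have "cmod (u + 1) \<le> cmod u + 1" using norm_triangle_ineq[of u 1] by simp
        ultimately show ?thesis by linarith
      qed
      show "cmod (k u * q u) \<le> B"
      proof (cases "2 * Re u + 1 = 0")
        case True then show ?thesis using qu C0 B_def by simp
      next
        case False
        have "cmod (k u * q u) = cmod (k u) * \<bar>2 * Re u + 1\<bar>" using qu by (simp add: norm_mult)
        also have "\<dots> \<le> C * (cmod u + cmod (u + 1)) / \<bar>2 * Re u + 1\<bar> * \<bar>2 * Re u + 1\<bar>"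
          using bnd[OF False] by (intro mult_right_mono) auto
        also have "\<dots> = C * (cmod u + cmod (u + 1))" using False by simp
        also have "\<dots> \<le> B" unfolding B_def using ub C0 by (intro mult_left_mono) auto
        finally show ?thesis .
      qed
    qed
    moreover have "cmod (q u0) \<ge> 1"
    proof -
      have "u0 - c = of_real (Re u0 + 1/2)" by (simp add: c_def complex_eq_iff)
      then have "q u0 = of_real ((Re u0 + 1/2)^2 + 1)" unfolding q_def by simp
      then have "cmod (q u0) = (Re u0 + 1/2)^2 + 1" by (simp only: norm_of_real) simp
      then show ?thesis by simp
    qed
    ultimately have "cmod (k u0) * 1 \<le> B"
      by (metis mult_left_mono norm_ge_zero norm_mult order_trans)
    then show ?thesis using B_def by simp
  qed
  have aff: "k \<xi> = k 0 + deriv k 0 * \<xi>" for \<xi>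
  proof -
    have "k \<xi> = (\<Sum>i\<le>1. (deriv^^i) k 0 / fact i * \<xi> ^ i)"
    proof (rule Liouville_polynomial[OF hol, of 1 "6 * C"])
      fix z :: complex assume "1 \<le> cmod z"
      then have "2 * cmod z + 4 \<le> 6 * cmod z" by linarith
      from mult_left_mono[OF this C0] have "C * (2 * cmod z + 4) \<le> 6 * C * cmod z ^ 1"
        by (simp add: algebra_simps)
      then show "cmod (k z) \<le> 6 * C * cmod z ^ 1" using G1[of z] by linarith
    qed
    then show ?thesis by simp
  qed
  have "deriv k 0 = 0"
  proof (rule ccontr)
    assume b: "deriv k 0 \<noteq> 0"
    define r where "r = (C + cmod (k 0) + 1) / cmod (deriv k 0)"
    have r0: "r > 0" unfolding r_def using b C0 by (simp add: add_nonneg_pos)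
    have "cmod (k (of_real r)) \<le> C * (cmod (of_real r) + cmod (of_real r + 1)) / \<bar>2 * Re (of_real r) + 1\<bar>"
      by (rule bnd) (use r0 in simp)
    also have "\<dots> = C"
    proof -
      have "cmod (complex_of_real r + 1) = r + 1"
        by (metis of_real_1 of_real_add norm_of_real r0 abs_of_pos add_pos_pos zero_less_one)
      then show ?thesis using r0 by simp
    qed
    finally have k1: "cmod (k (of_real r)) \<le> C" .
    have "cmod (deriv k 0 * of_real r) = cmod (deriv k 0) * r"
      using r0 by (simp only: norm_mult norm_of_real abs_of_pos)
    also have "\<dots> = C + cmod (k 0) + 1" using b unfolding r_def by simp
    finally have "cmod (deriv k 0 * of_real r) = C + cmod (k 0) + 1" .
    moreover have "cmod (deriv k 0 * of_real r) \<le> cmod (k (of_real r)) + cmod (k 0)"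
      using aff[of "of_real r"] norm_triangle_ineq4[of "k (of_real r)" "k 0"]
      by (metis add_diff_cancel_left' add.commute norm_minus_commute)
    ultimately show False using k1 by linarith
  qed
  then show ?thesis using aff by simp
qed




definition cq :: "complex \<Rightarrow> quat" where "cq c = Quat (Re c) (Im c) 0 0"

lemma cq_mult: "qmult (cq a) (cq b) = cq (a * b)"
  by (simp add: cq_def qmult_def)
lemma cq_add: "qadd (cq a) (cq b) = cq (a + b)"
  by (simp add: cq_def qadd_def)
lemma cq_real: "cq (of_real r) = qreal r"
  by (simp add: cq_def qreal_def)
lemma qabs_cq: "qabs (cq c) = cmod c"
  by (simp add: cq_def qabs_def cmod_def)
lemma qreal_comm: "qmult (qreal r) s = qmult s (qreal r)"
  by (simp add: qmult_def qreal_def)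
lemma qRe_cq: "qRe (cq c) = Re c"
  by (simp add: cq_def)
lemma cq_eq_1: "cq c = qreal 1 \<longleftrightarrow> c = 1"
  by (simp add: cq_def qreal_def complex_eq_iff)

locale qsetup =
  fixes lmul :: "quat \<Rightarrow> 'a::banach \<Rightarrow> 'a" and rmul :: "'a \<Rightarrow> quat \<Rightarrow> 'a"
  assumes qb: "two_sided_qbanach lmul rmul"
begin

lemma rmul_add: "rmul (x + y) s = rmul x s + rmul y s"
  and rmul_qadd: "rmul x (qadd s t) = rmul x s + rmul x t"
  and rmul_qmult: "rmul x (qmult s t) = rmul (rmul x s) t"
  and rmul_real: "rmul x (qreal r) = r *\<^sub>R x"
  and rmul_norm: "norm (rmul x s) = qabs s * norm x"
  using qb unfolding two_sided_qbanach_def by blast+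

definition cmul :: "complex \<Rightarrow> 'a \<Rightarrow> 'a" where "cmul c x = rmul x (cq c)"

lemma cmul_add: "cmul c (x + y) = cmul c x + cmul c y"
  by (simp add: cmul_def rmul_add)
lemma cmul_addc: "cmul (c + d) x = cmul c x + cmul d x"
  by (simp add: cmul_def rmul_qadd[symmetric] cq_add)
lemma cmul_cmul: "cmul c (cmul d x) = cmul (c * d) x"
  by (simp add: cmul_def rmul_qmult[symmetric] cq_mult mult.commute)
lemma cmul_real: "cmul (of_real r) x = r *\<^sub>R x"
  by (simp add: cmul_def cq_real rmul_real)
lemma cmul_1[simp]: "cmul 1 x = x"
  using cmul_real[of 1 x] by simp
lemma cmul_0[simp]: "cmul 0 x = 0"
  using cmul_real[of 0 x] by simp
lemma norm_cmul: "norm (cmul c x) = cmod c * norm x"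
  by (simp add: cmul_def rmul_norm qabs_cq)
lemma cmul_zero[simp]: "cmul c 0 = 0"
  using cmul_add[of c 0 0] by simp
lemma cmul_minus: "cmul c (- x) = - cmul c x"
  using cmul_add[of c x "-x"] by (simp add: eq_neg_iff_add_eq_0 add.commute)
lemma cmul_diff: "cmul c (x - y) = cmul c x - cmul c y"
  using cmul_add[of c x "-y"] cmul_minus by simp
lemma cmul_minusc: "cmul (- c) x = - cmul c x"
  using cmul_addc[of c "-c" x] by (simp add: eq_neg_iff_add_eq_0 add.commute)
lemma cmul_diffc: "cmul (c - d) x = cmul c x - cmul d x"
  using cmul_addc[of c "-d" x] cmul_minusc by simp
lemma cmul_comm: "cmul c (cmul d x) = cmul d (cmul c x)"
  by (simp add: cmul_cmul mult.commute)
lemma rmul_scaleR: "rmul (r *\<^sub>R x) s = r *\<^sub>R rmul x s"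
proof -
  have "rmul (r *\<^sub>R x) s = rmul (rmul x (qreal r)) s" by (simp add: rmul_real)
  also have "\<dots> = rmul x (qmult (qreal r) s)" by (simp add: rmul_qmult)
  also have "\<dots> = rmul (rmul x s) (qreal r)" by (simp add: rmul_qmult qreal_comm)
  finally show ?thesis by (simp add: rmul_real)
qed
lemma cmul_scaleR: "cmul c (r *\<^sub>R x) = r *\<^sub>R cmul c x"
  by (simp add: cmul_def rmul_scaleR)
lemma cmul_decomp: "cmul c x = Re c *\<^sub>R x + Im c *\<^sub>R cmul \<i> x"
proof -
  have "c = of_real (Re c) + of_real (Im c) * \<i>" by (simp add: complex_eq_iff)
  then have "cmul c x = cmul (of_real (Re c)) x + cmul (of_real (Im c)) (cmul \<i> x)"
    by (metis cmul_addc cmul_cmul)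
  then show ?thesis by (simp add: cmul_real)
qed
lemma cmul_ii: "cmul \<i> (cmul \<i> x) = - x"
  using cmul_cmul[of \<i> \<i> x] cmul_real[of "-1" x] by simp
lemma bl_cmul: "bounded_linear (cmul c)"
proof (rule bounded_linear_intro[where K = "cmod c"])
  show "cmul c (x + y) = cmul c x + cmul c y" for x y by (rule cmul_add)
  show "cmul c (r *\<^sub>R x) = r *\<^sub>R cmul c x" for r x by (rule cmul_scaleR)
  show "norm (cmul c x) \<le> norm x * cmod c" for x by (simp add: norm_cmul)
qed

lemma brl_cmul: "bounded_right_linear rmul F \<Longrightarrow> F (cmul c x) = cmul c (F x)"
  by (simp add: bounded_right_linear_def cmul_def)

end

locale qops = qsetup lmul rmul for lmul :: "quat \<Rightarrow> 'a::banach \<Rightarrow> 'a" and rmul +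
  fixes T :: "'a \<Rightarrow> 'a"
  assumes Tbrl: "bounded_right_linear rmul T"
    and Tinv: "invertible_op rmul T"
    and Tbdd: "bdd_above (range (\<lambda>n::int. onorm (op_int_power T n)))"
    and spec: "S_spectrum rmul T = {qreal 1}"
begin

lemma Tbl: "bounded_linear T" using Tbrl unfolding bounded_right_linear_def by blast
lemma Tcmul: "T (cmul c x) = cmul c (T x)" using brl_cmul[OF Tbrl] .
lemma T_diff: "T (x - y) = T x - T y" using Tbl by (simp add: linear_simps)

lemma Sprops: "bounded_right_linear rmul (inv T) \<and> (\<forall>x. T (inv T x) = x) \<and> (\<forall>x. inv T (T x) = x)"
proof -
  obtain S where S: "bounded_right_linear rmul S" "T \<circ> S = id" "S \<circ> T = id"
    using Tinv unfolding invertible_op_def by blast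
  have "inv T = S" using inv_unique_comp[OF S(2) S(3)] .
  then show ?thesis using S by (metis comp_apply id_apply)
qed

lemma brl_pow: "bounded_right_linear rmul F \<Longrightarrow> bounded_right_linear rmul (F ^^ n)"
proof (induction n)
  case 0 then show ?case by (simp add: bounded_right_linear_def bounded_linear_ident id_def)
next
  case (Suc n)
  then show ?case unfolding bounded_right_linear_def
    by (auto simp: comp_def intro!: bounded_linear_compose[where f=F])
qed

lemma exM: "\<exists>M\<ge>1. \<forall>n x. norm ((T^^n) x) \<le> M * norm x \<and> norm ((inv T^^n) x) \<le> M * norm x"
proof -
  obtain M0 where M0: "\<And>n. onorm (op_int_power T n) \<le> M0"
    using Tbdd unfolding bdd_above_def by auto
  define M where "M = max 1 M0"
  have "norm ((T^^n) x) \<le> M * norm x \<and> norm ((inv T^^n) x) \<le> M * norm x" for n x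
  proof (cases "n = 0")
    case True
    have "1 * norm x \<le> M * norm x" by (rule mult_right_mono) (auto simp: M_def)
    then show ?thesis using True by simp
  next
    case False
    have blT: "bounded_linear (T^^n)" using brl_pow[OF Tbrl] unfolding bounded_right_linear_def by blast
    have blS: "bounded_linear (inv T^^n)" using brl_pow Sprops unfolding bounded_right_linear_def by blast
    have "op_int_power T (int n) = T^^n" by (simp add: op_int_power_def)
    then have "onorm (T^^n) \<le> M" using M0[of "int n"] M_def by simp
    then have 1: "norm ((T^^n) x) \<le> M * norm x"
      using onorm[OF blT, of x] by (meson mult_right_mono norm_ge_zero order_trans)
    have "op_int_power T (- int n) = inv T^^n" using False by (simp add: op_int_power_def)
    then have "onorm (inv T^^n) \<le> M" using M0[of "- int n"] M_def by simp
    then have 2: "norm ((inv T^^n) x) \<le> M * norm x"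
      using onorm[OF blS, of x] by (meson mult_right_mono norm_ge_zero order_trans)
    show ?thesis using 1 2 by blast
  qed
  moreover have "M \<ge> 1" by (simp add: M_def)
  ultimately show ?thesis by blast
qed

definition P :: "complex \<Rightarrow> 'a \<Rightarrow> 'a" where "P a x = T x - cmul a x"
definition A :: "'a \<Rightarrow> 'a" where "A x = T x - x"
definition L :: "complex \<Rightarrow> 'a \<Rightarrow> 'a" where "L u x = x - cmul u (A x)"

lemma PP: "P a (P b x) = T (T x) - cmul (a + b) (T x) + cmul (a * b) x"
  by (simp add: P_def T_diff Tcmul cmul_diff cmul_cmul cmul_addc algebra_simps cmul_comm[of a b])

lemma bl_P: "bounded_linear (P a)"
  unfolding P_def by (intro bounded_linear_sub Tbl bl_cmul)

lemma P_zero: "P a 0 = 0" using bl_P[of a] by (simp add: linear_simps)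

lemma Q_eq: "Qop (cq a) T x = P a (P (cnj a) x)"
proof -
  have e1: "cmul (a + cnj a) y = (2 * Re a) *\<^sub>R y" for y by (metis complex_add_cnj cmul_real)
  have e2: "cmul (a * cnj a) y = (cmod a)^2 *\<^sub>R y" for y by (metis complex_norm_square cmul_real)
  show ?thesis by (simp add: PP e1 e2 Qop_def qRe_cq qabs_cq)
qed

lemma Q_eq': "Qop (cq a) T x = P (cnj a) (P a x)"
  using Q_eq[of a x] by (simp add: PP add.commute mult.commute)

lemma L_P: "u \<noteq> 0 \<Longrightarrow> L u x = - cmul u (P (1 + 1/u) x)"
proof -
  assume u: "u \<noteq> 0"
  have "u * (1 + 1/u) = u + 1" using u by (simp add: field_simps)
  then have "cmul u (cmul (1 + 1/u) x) = cmul (u + 1) x" by (simp only: cmul_cmul)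
  then have "cmul u (cmul (1 + 1/u) x) = cmul u x + x" by (simp only: cmul_addc cmul_1)
  then show ?thesis
    by (simp add: L_def A_def P_def cmul_diff)
qed

lemma A_diff: "A (x - y) = A x - A y" by (simp add: A_def T_diff)

lemma L_diff: "L u (x - y) = L u x - L u y"
  by (simp add: L_def A_diff cmul_diff)

lemma L_cmul: "L u (cmul c x) = cmul c (L u x)"
  by (simp add: L_def A_def Tcmul cmul_diff cmul_comm)

lemma A_cmul: "A (cmul c x) = cmul c (A x)"
  by (simp add: A_def Tcmul cmul_diff)

lemma bl_A: "bounded_linear A"
  unfolding A_def by (intro bounded_linear_sub Tbl bounded_linear_ident)

lemma Linv: "\<exists>B. bounded_linear B \<and> (\<forall>x. L u (B x) = x) \<and> (\<forall>x. B (L u x) = x)"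
proof (cases "u = 0")
  case True
  then show ?thesis by (intro exI[of _ "\<lambda>x. x"]) (simp add: L_def bounded_linear_ident)
next
  case u: False
  define l where "l = 1 + 1/u"
  have "l \<noteq> 1" using u by (simp add: l_def)
  then have "cq l \<notin> S_spectrum rmul T" using spec cq_eq_1 by auto
  then have "invertible_op rmul (Qop (cq l) T)" unfolding S_spectrum_def by simp
  then obtain G where G: "bounded_right_linear rmul G" "Qop (cq l) T \<circ> G = id" "G \<circ> Qop (cq l) T = id"
    unfolding invertible_op_def by blast
  have QG: "Qop (cq l) T (G w) = w" for w using G(2) by (metis comp_apply id_apply)
  have GQ: "G (Qop (cq l) T w) = w" for w using G(3) by (metis comp_apply id_apply)
  have Gbl: "bounded_linear G" using G(1) unfolding bounded_right_linear_def by blast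
  define B where "B x = P (cnj l) (G (cmul (-1/u) x))" for x
  have Bbl: "bounded_linear B" unfolding B_def
    using bounded_linear_compose[OF bl_P bounded_linear_compose[OF Gbl bl_cmul]]
    by (simp add: o_def)
  have LB: "L u (B x) = x" for x
  proof -
    have "L u (B x) = - cmul u (P l (P (cnj l) (G (cmul (-1/u) x))))"
      using L_P[OF u] l_def B_def by simp
    also have "\<dots> = - cmul u (cmul (-1/u) x)" using Q_eq QG by simp
    also have "\<dots> = x" using u by (simp add: cmul_cmul cmul_minus cmul_minusc)
    finally show ?thesis .
  qed
  have inj: "y = 0" if "L u y = 0" for y
  proof -
    have "cmul u (P l y) = 0" using that L_P[OF u] l_def by simp
    then have "norm (P l y) = 0" using u by (metis norm_cmul norm_zero mult_eq_0_iff norm_eq_zero)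
    then have "P l y = 0" by simp
    then have "Qop (cq l) T y = 0" using Q_eq' P_zero by simp
    then show "y = 0" using GQ[of y] Gbl by (simp add: linear_simps)
  qed
  have "B (L u x) = x" for x
  proof -
    have "L u (B (L u x) - x) = 0" using L_diff LB by simp
    then have "B (L u x) - x = 0" by (rule inj)
    then show ?thesis by simp
  qed
  then show ?thesis using Bbl LB by blast
qed

end



context qops begin

definition Bop where "Bop u = (SOME B. bounded_linear B \<and> (\<forall>x. L u (B x) = x) \<and> (\<forall>x. B (L u x) = x))"

lemma Bop: "bounded_linear (Bop u)" "L u (Bop u x) = x" "Bop u (L u x) = x"
  using someI_ex[OF Linv[of u]] unfolding Bop_def by blast+

definition Mb where "Mb = (SOME M. M \<ge> 1 \<and> (\<forall>n x. norm ((T^^n) x) \<le> M * norm x \<and> norm ((inv T^^n) x) \<le> M * norm x))"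

lemma Mb: "Mb \<ge> 1" "norm ((T^^n) x) \<le> Mb * norm x" "norm ((inv T^^n) x) \<le> Mb * norm x"
  using someI_ex[OF exM] unfolding Mb_def by blast+

lemma L_inj: "L u a = L u b \<Longrightarrow> a = b" by (metis Bop(3))

lemma resolvent: "Bop u x - Bop v x = cmul (u - v) (Bop u (A (Bop v x)))"
proof -
  have Luv: "L u z = L v z - cmul (u - v) (A z)" for z by (simp add: L_def cmul_diffc)
  have "L u (Bop u x - Bop v x) = cmul (u - v) (A (Bop v x))"
    using L_diff Bop(2) Luv[of "Bop v x"] by simp
  also have "\<dots> = L u (cmul (u - v) (Bop u (A (Bop v x))))" by (simp add: L_cmul Bop(2))
  finally show ?thesis by (rule L_inj)
qed

lemma Sbrl: "bounded_right_linear rmul (inv T)" using Sprops by blast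
lemma pow_cmul: "bounded_right_linear rmul F \<Longrightarrow> (F^^n) (cmul c x) = cmul c ((F^^n) x)"
  using brl_cmul brl_pow by blast
lemma pow_diff: "bounded_right_linear rmul F \<Longrightarrow> (F^^n) (x - y) = (F^^n) x - (F^^n) y"
  using brl_pow unfolding bounded_right_linear_def by (metis bounded_linear.linear linear_diff)

lemma tele1:
  assumes l: "l \<noteq> 0"
  shows "(\<Sum>n<N. cmul ((1/l)^Suc n) ((T^^n) (P l y))) = cmul ((1/l)^N) ((T^^N) y) - y"
proof (induction N)
  case 0 show ?case by simp
next
  case (Suc N)
  have "(T^^N) (P l y) = (T^^Suc N) y - cmul l ((T^^N) y)"
    by (simp add: P_def pow_diff[OF Tbrl] pow_cmul[OF Tbrl] funpow_Suc_right del: funpow.simps)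
  then have "cmul ((1/l)^Suc N) ((T^^N) (P l y)) = cmul ((1/l)^Suc N) ((T^^Suc N) y) - cmul ((1/l)^N) ((T^^N) y)"
    using l by (simp add: cmul_diff cmul_cmul del: funpow.simps)
  then show ?case using Suc by (simp del: funpow.simps)
qed

lemma tele2:
  "(\<Sum>n<N. cmul (l^n) ((inv T^^Suc n) (P l y))) = y - cmul (l^N) ((inv T^^N) y)"
proof (induction N)
  case 0 show ?case by simp
next
  case (Suc N)
  have ST: "inv T (T z) = z" for z using Sprops by blast
  have "(inv T^^Suc N) (P l y) = (inv T^^N) y - cmul l ((inv T^^Suc N) y)"
    by (simp add: P_def pow_diff[OF Sbrl] pow_cmul[OF Sbrl] ST del: funpow.simps)
      (simp add: funpow_Suc_right ST del: funpow.simps)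
  then have "cmul (l^N) ((inv T^^Suc N) (P l y)) = cmul (l^N) ((inv T^^N) y) - cmul (l^Suc N) ((inv T^^Suc N) y)"
    by (simp add: cmul_diff cmul_cmul mult.commute del: funpow.simps)
  then show ?case using Suc by (simp del: funpow.simps)
qed

lemma lim_geo_bound:
  fixes a K c r :: real
  assumes "0 \<le> r" "r < 1" "\<And>N. a \<le> K + r^N * c"
  shows "a \<le> K"
proof -
  have "(\<lambda>N. K + r^N * c) \<longlonglongrightarrow> K + 0 * c"
    by (intro tendsto_intros LIMSEQ_power_zero) (use assms in simp)
  then show ?thesis using assms(3) by (intro LIMSEQ_le_const[of _ K a]) auto
qed

lemma nb1:
  assumes l: "cmod l > 1"
  shows "norm y \<le> Mb * norm (P l y) / (cmod l - 1)"
proof -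
  define r where "r = 1 / cmod l"
  have r: "0 \<le> r" "r < 1" "r > 0" using l by (auto simp: r_def divide_less_eq)
  have l0: "l \<noteq> 0" using l by auto
  have "norm y \<le> Mb * norm (P l y) * (r / (1 - r)) + r^N * (Mb * norm y)" for N
  proof -
    have "y = cmul ((1/l)^N) ((T^^N) y) - (\<Sum>n<N. cmul ((1/l)^Suc n) ((T^^n) (P l y)))"
      using tele1[OF l0, where N=N and y=y] by simp
    then have "norm y \<le> norm (cmul ((1/l)^N) ((T^^N) y)) + norm (\<Sum>n<N. cmul ((1/l)^Suc n) ((T^^n) (P l y)))"
      by (metis norm_triangle_ineq4)
    also have "norm (cmul ((1/l)^N) ((T^^N) y)) \<le> r^N * (Mb * norm y)"
      by (simp add: norm_cmul r_def norm_power norm_divide Mb(2) mult_left_mono del: funpow.simps)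
    also have "norm (\<Sum>n<N. cmul ((1/l)^Suc n) ((T^^n) (P l y))) \<le> (\<Sum>n<N. r^Suc n * (Mb * norm (P l y)))"
      by (rule order_trans[OF norm_sum sum_mono])
        (simp add: norm_cmul r_def norm_power norm_divide Mb(2) mult_left_mono del: funpow.simps power_Suc)
    also have "(\<Sum>n<N. r^Suc n * (Mb * norm (P l y))) = Mb * norm (P l y) * (r * (\<Sum>n<N. r^n))"
      by (simp add: sum_distrib_left sum_distrib_right algebra_simps)
    also have "\<dots> \<le> Mb * norm (P l y) * (r / (1 - r))"
    proof -
      have "(\<Sum>n<N. r^n) = (1 - r^N) / (1 - r)" using r by (simp add: sum_gp_strict)
      also have "\<dots> \<le> 1 / (1 - r)" using r by (simp add: divide_right_mono)
      finally have "r * (\<Sum>n<N. r^n) \<le> r * (1 / (1 - r))" using r by (intro mult_left_mono) auto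
      then have "r * (\<Sum>n<N. r^n) \<le> r / (1 - r)" by simp
      then show ?thesis using Mb(1) by (intro mult_left_mono) auto
    qed
    finally show ?thesis by linarith
  qed
  then have "norm y \<le> Mb * norm (P l y) * (r / (1 - r))"
    using lim_geo_bound[OF r(1,2)] by blast
  also have "r / (1 - r) = 1 / (cmod l - 1)" using l l0 by (simp add: r_def field_simps)
  finally show ?thesis by simp
qed

lemma nb2:
  assumes l: "cmod l < 1"
  shows "norm y \<le> Mb * norm (P l y) / (1 - cmod l)"
proof -
  define r where "r = cmod l"
  have r: "0 \<le> r" "r < 1" using l by (auto simp: r_def)
  have "norm y \<le> Mb * norm (P l y) * (1 / (1 - r)) + r^N * (Mb * norm y)" for N
  proof -
    have "y = (\<Sum>n<N. cmul (l^n) ((inv T^^Suc n) (P l y))) + cmul (l^N) ((inv T^^N) y)"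
      using tele2[where N=N and l=l and y=y] by simp
    then have "norm y \<le> norm (\<Sum>n<N. cmul (l^n) ((inv T^^Suc n) (P l y))) + norm (cmul (l^N) ((inv T^^N) y))"
      by (metis norm_triangle_ineq)
    also have "norm (cmul (l^N) ((inv T^^N) y)) \<le> r^N * (Mb * norm y)"
      by (simp add: norm_cmul r_def norm_power Mb(3) mult_left_mono del: funpow.simps)
    also have "norm (\<Sum>n<N. cmul (l^n) ((inv T^^Suc n) (P l y))) \<le> (\<Sum>n<N. r^n * (Mb * norm (P l y)))"
      by (rule order_trans[OF norm_sum sum_mono])
        (simp add: norm_cmul r_def norm_power Mb(3) mult_left_mono del: funpow.simps)
    also have "(\<Sum>n<N. r^n * (Mb * norm (P l y))) = Mb * norm (P l y) * (\<Sum>n<N. r^n)"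
      by (simp add: sum_distrib_left sum_distrib_right algebra_simps)
    also have "\<dots> \<le> Mb * norm (P l y) * (1 / (1 - r))"
    proof -
      have "(\<Sum>n<N. r^n) = (1 - r^N) / (1 - r)" using r by (simp add: sum_gp_strict)
      also have "\<dots> \<le> 1 / (1 - r)" using r by (simp add: divide_right_mono)
      finally show ?thesis using Mb(1) by (intro mult_left_mono) auto
    qed
    finally show ?thesis by linarith
  qed
  then have "norm y \<le> Mb * norm (P l y) * (1 / (1 - r))"
    using lim_geo_bound[OF r(1,2)] by blast
  then show ?thesis by (simp add: r_def)
qed

end



context qops begin

lemma nbL:
  assumes u: "u \<noteq> 0" and e: "2 * Re u + 1 \<noteq> 0"
  shows "norm y \<le> Mb * (cmod u + cmod (u + 1)) / \<bar>2 * Re u + 1\<bar> * norm (L u y)"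
proof -
  define l where "l = 1 + 1/u"
  define a where "a = cmod u"
  define b where "b = cmod (u + 1)"
  define nL where "nL = norm (L u y)"
  have a: "a > 0" using u a_def by simp
  have b: "b \<ge> 0" using b_def by simp
  have "cmul (-1/u) (L u y) = P l y" using L_P[OF u, of y] u
    by (simp add: l_def cmul_minus cmul_cmul cmul_minusc)
  then have nP: "norm (P l y) = nL / a"
    by (metis norm_cmul a_def nL_def norm_divide norm_minus_cancel norm_one mult.commute
        divide_inverse mult_1)
  have "l = (u + 1) / u" using u by (simp add: l_def field_simps)
  then have nl: "cmod l = b / a" by (simp add: a_def b_def norm_divide)
  have key: "(b - a) * (b + a) = 2 * Re u + 1"
  proof -
    have "(b - a) * (b + a) = b^2 - a^2" by (simp add: algebra_simps power2_eq_square)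
    also have "\<dots> = 2 * Re u + 1" unfolding a_def b_def cmod_power2 by (simp add: power2_eq_square algebra_simps)
    finally show ?thesis .
  qed
  have s: "b + a > 0" using a b by simp
  consider "b - a > 0" | "b - a < 0" using key e by fastforce
  then show ?thesis
  proof cases
    case 1
    have "b / a > 1" using 1 a by (simp add: less_divide_eq)
    then have "cmod l > 1" using nl by simp
    from nb1[OF this, of y] have "norm y \<le> Mb * (nL / a) / (b / a - 1)" using nP nl by simp
    also have "\<dots> = Mb * nL / (b - a)" using a 1 by (simp add: field_simps)
    also have "\<dots> = Mb * (a + b) / \<bar>2 * Re u + 1\<bar> * nL"
    proof -
      have "(b - a) * (b + a) > 0" using 1 s by (simp add: mult_pos_pos)
      then have E: "\<bar>2 * Re u + 1\<bar> = (b - a) * (b + a)" using key by simp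
      have ne: "b - a \<noteq> 0" "b + a \<noteq> 0" using 1 s by auto
      define X where "X = (b - a) * (b + a)"
      have X0: "X \<noteq> 0" using ne X_def by simp
      have "Mb * nL / (b - a) = Mb * (a + b) / X * nL" using ne X0
        by (simp add: field_simps; simp add: X_def algebra_simps)
      then show ?thesis unfolding E X_def .
    qed
    finally show ?thesis by (simp add: a_def b_def nL_def)
  next
    case 2
    have "b / a < 1" using 2 a by (simp add: divide_less_eq)
    then have "cmod l < 1" using nl by simp
    from nb2[OF this, of y] have "norm y \<le> Mb * (nL / a) / (1 - b / a)" using nP nl by simp
    also have "\<dots> = Mb * nL / (a - b)" using a 2 by (simp add: field_simps)
    also have "\<dots> = Mb * (a + b) / \<bar>2 * Re u + 1\<bar> * nL"
    proof -
      have "\<bar>2 * Re u + 1\<bar> = (a - b) * (b + a)" using key 2 s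
        by (metis abs_of_neg mult_neg_pos minus_diff_eq mult_minus_left)
      note E = this
      have ne: "a - b \<noteq> 0" "b + a \<noteq> 0" using 2 s by auto
      define X where "X = (a - b) * (b + a)"
      have X0: "X \<noteq> 0" using ne X_def by simp
      have "Mb * nL / (a - b) = Mb * (a + b) / X * nL" using ne X0
        by (simp add: field_simps; simp add: X_def algebra_simps)
      then show ?thesis unfolding E X_def .
    qed
    finally show ?thesis by (simp add: a_def b_def nL_def)
  qed
qed

lemma Bcont: "((\<lambda>u. Bop u z) \<longlongrightarrow> Bop u0 z) (at u0)"
proof -
  obtain K0 where K0: "K0 > 0" "\<And>w. norm (Bop u0 w) \<le> norm w * K0"
    using bounded_linear.pos_bounded[OF Bop(1)[of u0]] by blast
  obtain Ka where Ka: "Ka > 0" "\<And>w. norm (A w) \<le> norm w * Ka"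
    using bounded_linear.pos_bounded[OF bl_A] by blast
  define d where "d = 1 / (2 * K0 * Ka)"
  have d: "d > 0" using K0 Ka by (simp add: d_def)
  have loc: "norm (Bop u w) \<le> 2 * K0 * norm w" if "cmod (u - u0) < d" for u w
  proof -
    have "Bop u w = Bop u0 w - cmul (u0 - u) (Bop u0 (A (Bop u w)))"
      by (simp add: resolvent[of u0 w u, symmetric])
    then have n1: "norm (Bop u w) \<le> norm (Bop u0 w) + cmod (u0 - u) * norm (Bop u0 (A (Bop u w)))"
      by (metis norm_cmul norm_triangle_ineq4)
    have n2: "norm (Bop u0 (A (Bop u w))) \<le> norm (Bop u w) * Ka * K0"
    proof -
      have "norm (Bop u0 (A (Bop u w))) \<le> norm (A (Bop u w)) * K0" by (rule K0(2))
      also have "\<dots> \<le> norm (Bop u w) * Ka * K0" using Ka(2) K0(1) by (intro mult_right_mono) auto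
      finally show ?thesis .
    qed
    have n3: "cmod (u0 - u) * norm (Bop u0 (A (Bop u w))) \<le> d * (norm (Bop u w) * Ka * K0)"
      using n2 that d by (intro mult_mono) (auto simp: norm_minus_commute)
    have n4: "d * (norm (Bop u w) * Ka * K0) = norm (Bop u w) / 2" using K0 Ka by (simp add: d_def)
    have "norm (Bop u w) \<le> norm (Bop u0 w) + norm (Bop u w) / 2" using n1 n3 n4 by linarith
    moreover have "norm (Bop u0 w) \<le> K0 * norm w" using K0(2)[of w] by (simp add: mult.commute)
    ultimately show ?thesis by linarith
  qed
  have ev: "\<forall>\<^sub>F u in at u0. norm (Bop u z - Bop u0 z) \<le> cmod (u - u0) * (2 * K0 * (norm (Bop u0 z) * Ka))"
    unfolding eventually_at
  proof (intro exI[of _ d] conjI ballI impI d)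
    fix u assume "u \<in> UNIV" "u \<noteq> u0 \<and> dist u u0 < d"
    then have du: "cmod (u - u0) < d" by (simp add: dist_norm)
    have "norm (Bop u z - Bop u0 z) = cmod (u - u0) * norm (Bop u (A (Bop u0 z)))"
      by (simp add: resolvent norm_cmul)
    also have "\<dots> \<le> cmod (u - u0) * (2 * K0 * (norm (Bop u0 z) * Ka))"
      using loc[OF du, of "A (Bop u0 z)"] Ka(2)[of "Bop u0 z"] K0
      by (intro mult_left_mono) (auto intro: order_trans)
    finally show "norm (Bop u z - Bop u0 z) \<le> cmod (u - u0) * (2 * K0 * (norm (Bop u0 z) * Ka))" .
  qed
  have "((\<lambda>u. cmod (u - u0) * (2 * K0 * (norm (Bop u0 z) * Ka))) \<longlongrightarrow> 0) (at u0)"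
    by (intro tendsto_mult_left_zero tendsto_norm_zero LIM_zero tendsto_ident_at)
  from Lim_null_comparison[OF ev this] show ?thesis by (simp add: LIM_zero_iff)
qed

end




context qsetup begin

definition psi :: "('a \<Rightarrow> real) \<Rightarrow> 'a \<Rightarrow> complex" where
  "psi \<phi> y = Complex (\<phi> y) (- \<phi> (cmul \<i> y))"

lemma psi_cmul:
  assumes "bounded_linear \<phi>"
  shows "psi \<phi> (cmul c y) = c * psi \<phi> y"
proof -
  have lin: "linear \<phi>" using assms bounded_linear.linear by blast
  have e1: "\<phi> (cmul c y) = Re c * \<phi> y + Im c * \<phi> (cmul \<i> y)"
    using lin by (simp add: cmul_decomp[of c y] linear_add linear_scale)
  have e2: "\<phi> (cmul \<i> (cmul c y)) = Re c * \<phi> (cmul \<i> y) - Im c * \<phi> y"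
  proof -
    have "cmul \<i> (cmul c y) = cmul c (cmul \<i> y)" by (rule cmul_comm)
    also have "\<dots> = Re c *\<^sub>R cmul \<i> y + Im c *\<^sub>R (- y)" by (simp add: cmul_decomp[of c "cmul \<i> y"] cmul_ii)
    finally show ?thesis using lin by (simp add: linear_diff linear_scale)
  qed
  show ?thesis unfolding psi_def by (simp add: e1 e2 complex_eq_iff algebra_simps)
qed

lemma psi_diff: "bounded_linear \<phi> \<Longrightarrow> psi \<phi> (x - y) = psi \<phi> x - psi \<phi> y"
  unfolding psi_def by (simp add: cmul_diff linear_diff[OF bounded_linear.linear] complex_eq_iff)

lemma psi_bl:
  assumes "bounded_linear \<phi>"
  shows "bounded_linear (psi \<phi>)"
proof -
  obtain K where K: "\<And>x. norm (\<phi> x) \<le> norm x * K" using bounded_linear.bounded[OF assms] by blast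
  show ?thesis
  proof (rule bounded_linear_intro[where K = "2 * K"])
    show "psi \<phi> (x + y) = psi \<phi> x + psi \<phi> y" for x y
      unfolding psi_def by (simp add: cmul_add linear_add[OF bounded_linear.linear[OF assms]] complex_eq_iff)
    show "psi \<phi> (r *\<^sub>R x) = r *\<^sub>R psi \<phi> x" for r x
      unfolding psi_def by (simp add: cmul_scaleR linear_scale[OF bounded_linear.linear[OF assms]] complex_eq_iff)
    show "norm (psi \<phi> x) \<le> norm x * (2 * K)" for x
    proof -
      have "norm (psi \<phi> x) \<le> \<bar>\<phi> x\<bar> + \<bar>\<phi> (cmul \<i> x)\<bar>"
        unfolding psi_def using cmod_le[of "Complex (\<phi> x) (- \<phi> (cmul \<i> x))"] by simp
      moreover have "\<bar>\<phi> x\<bar> \<le> norm x * K" using K[of x] by simp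
      moreover have "\<bar>\<phi> (cmul \<i> x)\<bar> \<le> norm x * K" using K[of "cmul \<i> x"] by (simp add: norm_cmul)
      moreover have "norm x * (2 * K) = norm x * K + norm x * K" by (simp add: algebra_simps)
      ultimately show ?thesis by linarith
    qed
  qed
qed

lemma Re_psi: "Re (psi \<phi> y) = \<phi> y" by (simp add: psi_def)

end

context qops begin

lemma k_deriv:
  assumes psbl: "bounded_linear \<phi>"
  shows "((\<lambda>u. psi \<phi> (Bop u x)) has_field_derivative psi \<phi> (Bop u0 (A (Bop u0 x)))) (at u0)"
  unfolding has_field_derivative_iff
proof -
  have ev: "\<forall>\<^sub>F u in at u0. psi \<phi> (Bop u (A (Bop u0 x))) = (psi \<phi> (Bop u x) - psi \<phi> (Bop u0 x)) / (u - u0)"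
    unfolding eventually_at
  proof (intro exI[of _ 1] conjI ballI impI)
    fix u assume "u \<in> UNIV" "u \<noteq> u0 \<and> dist u u0 < 1"
    then have nz: "u - u0 \<noteq> 0" by simp
    have "psi \<phi> (Bop u x) - psi \<phi> (Bop u0 x) = (u - u0) * psi \<phi> (Bop u (A (Bop u0 x)))"
      by (simp only: psi_diff[OF psbl, symmetric] resolvent psi_cmul[OF psbl])
    then show "psi \<phi> (Bop u (A (Bop u0 x))) = (psi \<phi> (Bop u x) - psi \<phi> (Bop u0 x)) / (u - u0)"
      using nz by simp
  qed simp
  have "((\<lambda>u. psi \<phi> (Bop u (A (Bop u0 x)))) \<longlongrightarrow> psi \<phi> (Bop u0 (A (Bop u0 x)))) (at u0)"
    by (rule bounded_linear.tendsto[OF psi_bl[OF psbl] Bcont])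
  then show "((\<lambda>u. (psi \<phi> (Bop u x) - psi \<phi> (Bop u0 x)) / (u - u0)) \<longlongrightarrow> psi \<phi> (Bop u0 (A (Bop u0 x)))) (at u0)"
    by (rule iffD1[OF tendsto_cong[OF ev]])
qed

lemma k_hol: "bounded_linear \<phi> \<Longrightarrow> (\<lambda>u. psi \<phi> (Bop u x)) holomorphic_on UNIV"
  using k_deriv by (auto simp: holomorphic_on_open)

lemma B0: "Bop 0 x = x" using Bop(3)[of 0 x] by (simp add: L_def)

lemma k_bound:
  assumes psbl: "bounded_linear \<phi>" and e: "2 * Re u + 1 \<noteq> 0"
    and that: "\<And>y. cmod (psi \<phi> y) \<le> norm y * K" "K > 0"
  shows "cmod (psi \<phi> (Bop u x)) \<le> (K * Mb * norm x) * (cmod u + cmod (u + 1)) / \<bar>2 * Re u + 1\<bar>"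
proof (cases "u = 0")
  case True
  have "cmod (psi \<phi> (Bop u x)) \<le> norm x * K" using that(1) True B0 by simp
  also have "\<dots> \<le> K * Mb * norm x"
  proof -
    have "norm x * K * 1 \<le> norm x * K * Mb" using Mb(1) that(2) by (intro mult_left_mono) auto
    then show ?thesis by (simp add: algebra_simps)
  qed
  finally show ?thesis using True by simp
next
  case False
  have "cmod (psi \<phi> (Bop u x)) \<le> norm (Bop u x) * K" by (rule that(1))
  also have "norm (Bop u x) \<le> Mb * (cmod u + cmod (u + 1)) / \<bar>2 * Re u + 1\<bar> * norm x"
    using nbL[OF False e, of "Bop u x"] Bop(2) by simp
  finally have "cmod (psi \<phi> (Bop u x)) \<le> Mb * (cmod u + cmod (u + 1)) / \<bar>2 * Re u + 1\<bar> * norm x * K"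
    using that(2) by (simp add: mult_right_mono)
  moreover have "Mb * (cmod u + cmod (u + 1)) / \<bar>2 * Re u + 1\<bar> * norm x * K =
      (K * Mb * norm x) * (cmod u + cmod (u + 1)) / \<bar>2 * Re u + 1\<bar>"
    by (simp only: times_divide_eq_left times_divide_eq_right mult_ac)
  ultimately show ?thesis by (rule ord_le_eq_trans)
qed

lemma T_id: "T = id"
proof
  fix z
  have "\<phi> (A z) = 0" if psbl: "bounded_linear \<phi>" for \<phi> :: "'a \<Rightarrow> real"
  proof -
    obtain K where K: "K > 0" "\<And>y. cmod (psi \<phi> y) \<le> norm y * K"
      using bounded_linear.pos_bounded[OF psi_bl[OF psbl]] by blast
    have const: "psi \<phi> (Bop u x) = psi \<phi> x" for u x
    proof -
      have "psi \<phi> (Bop u x) = psi \<phi> (Bop 0 x)"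
        by (rule scalar_key[OF k_hol[OF psbl], where C = "K * Mb * norm x"])
          (rule k_bound[OF psbl _ K(2) K(1)])
      then show ?thesis by (simp add: B0)
    qed
    have "psi \<phi> z = psi \<phi> (L 1 z)" using const[of 1 "L 1 z"] Bop(3) by simp
    also have "\<dots> = psi \<phi> z - psi \<phi> (A z)" by (simp add: L_def psi_diff[OF psbl])
    finally have "psi \<phi> (A z) = 0" by simp
    then show ?thesis using Re_psi[of \<phi> "A z"] by simp
  qed
  then have "A z = 0" using hahn_banach_point[of "A z"] by blast
  then show "T z = id z" by (simp add: A_def)
qed

end


theorem corollary4p4:
  fixes lmul :: "quat \<Rightarrow> 'a::banach \<Rightarrow> 'a" and rmul :: "'a \<Rightarrow> quat \<Rightarrow> 'a"
    and T :: "'a \<Rightarrow> 'a"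
  assumes "two_sided_qbanach lmul rmul"
    and "bounded_right_linear rmul T"
    and "invertible_op rmul T"
    and "bdd_above (range (\<lambda>n::int. onorm (op_int_power T n)))"
    and "S_spectrum rmul T = {qreal 1}"
  shows "T = id"
proof -
  interpret qops lmul rmul T
    using assms by (simp add: qops_def qsetup_def qops_axioms_def)
  show ?thesis by (rule T_id)
qed

end
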